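(* If two topological coarse spaces $X$ and $Y$ are coarsely equivalent, then $\mathrm{Ends}(X)$ is homeomorphic to $\mathrm{Ends}(Y)$.
   Context: For a family $\mathcal U$ of subsets of $X$ and $A\subset X$, $st(A,\mathcal U)$ is the union of all $U\in\mathcal U$ meeting $A$; $st(\mathcal U,\mathcal V)=\{st(U,\mathcal V):U\in\mathcal U\}$. A large scale space is a set with a family of covers (uniformly bounded covers) closed under $st(\cdot,\cdot)$ and under passing to refinements; bounded sets are subsets of elements of uniformly bounded covers. A topological coarse space is a large scale space with a topology such that some uniformly bounded cover consists of open sets, and the union of two bounded sets is bounded. $A\subset X$ is coarsely clopen if $st(A,\mathcal U)\cap st(X\setminus A,\mathcal U)$ is bounded for every uniformly bounded $\mathcal U$. An end is a family of unbounded open coarsely clopen subsets of $X$, maximal among such families closed under finite intersections; $\mathrm{Ends}(X)$ carries the topology in which, for open coarsely clopen $U$, the sets $\{E: U\in E\}$ form a basis (the subspace topology from $X\cup\mathrm{Ends}(X)$, where $Y$ is open iff $Y\cap X$ is open and each end $E\in Y$ has an open coarsely clopen $U\in E$ with $U\cup\{E':U\in E'\}\subset Y$). A map $f:X\to Y$ is coarse if preimages of bounded sets are bounded and large scale continuous if images of uniformly bounded covers are uniformly bounded; $f,g:X\to Y$ are close if there is a uniformly bounded cover $\mathcal U$ of $Y$ with $f(x)\in st(g(x),\mathcal U)$ for all $x$. $X,Y$ are coarsely equivalent if there are coarse large scale continuous $f:X\to Y$, $g:Y\to X$ with $g\circ f$ close to $\mathrm{id}_X$ and $f\circ g$ close to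 $\mathrm{id}_Y$. *)

theory Defs
  imports "HOL-Analysis.Analysis"
begin

definition st :: "'a set \<Rightarrow> 'a set set \<Rightarrow> 'a set" where
  "st A \<U> = \<Union>{U \<in> \<U>. U \<inter> A \<noteq> {}}"

definition st_fam :: "'a set set \<Rightarrow> 'a set set \<Rightarrow> 'a set set" where
  "st_fam \<U> \<V> = (\<lambda>U. st U \<V>) ` \<U>"

definition is_cover :: "'a set \<Rightarrow> 'a set set \<Rightarrow> bool" where
  "is_cover X \<U> \<longleftrightarrow> \<U> \<subseteq> Pow X \<and> \<Union>\<U> = X"

definition refines :: "'a set set \<Rightarrow> 'a set set \<Rightarrow> bool" where
  "refines \<V> \<U> \<longleftrightarrow> (\<forall>V\<in>\<V>. \<exists>U\<in>\<U>. V \<subseteq> U)"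

text \<open>A large scale structure on X: a set LS of covers of X (the uniformly bounded covers),
  closed under stars and under passing to refining covers.\<close>
definition large_scale :: "'a set \<Rightarrow> 'a set set set \<Rightarrow> bool" where
  "large_scale X LS \<longleftrightarrow>
     (\<forall>\<U>\<in>LS. is_cover X \<U>) \<and>
     (\<forall>\<U>\<in>LS. \<forall>\<V>\<in>LS. st_fam \<U> \<V> \<in> LS) \<and>
     (\<forall>\<U>\<in>LS. \<forall>\<V>. is_cover X \<V> \<and> refines \<V> \<U> \<longrightarrow> \<V> \<in> LS)"

definition ls_bounded :: "'a set set set \<Rightarrow> 'a set \<Rightarrow> bool" where
  "ls_bounded LS B \<longleftrightarrow> (\<exists>\<U>\<in>LS. \<exists>U\<in>\<U>. B \<subseteq> U)"

definition ub_family :: "'a set set set \<Rightarrow> 'a set set \<Rightarrow> bool" where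
  "ub_family LS \<V> \<longleftrightarrow> (\<exists>\<U>\<in>LS. refines \<V> \<U>)"

definition top_coarse_space :: "'a topology \<Rightarrow> 'a set set set \<Rightarrow> bool" where
  "top_coarse_space T LS \<longleftrightarrow>
     large_scale (topspace T) LS \<and>
     (\<exists>\<U>\<in>LS. \<forall>U\<in>\<U>. openin T U) \<and>
     (\<forall>A B. A \<subseteq> topspace T \<and> B \<subseteq> topspace T \<and> ls_bounded LS A \<and> ls_bounded LS B
            \<longrightarrow> ls_bounded LS (A \<union> B))"

definition coarsely_clopen :: "'a set \<Rightarrow> 'a set set set \<Rightarrow> 'a set \<Rightarrow> bool" where
  "coarsely_clopen X LS A \<longleftrightarrow> A \<subseteq> X \<and>
     (\<forall>\<U>\<in>LS. ls_bounded LS (st A \<U> \<inter> st (X - A) \<U>))"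

definition end_set :: "'a topology \<Rightarrow> 'a set set set \<Rightarrow> 'a set \<Rightarrow> bool" where
  "end_set T LS U \<longleftrightarrow> openin T U \<and> coarsely_clopen (topspace T) LS U \<and> \<not> ls_bounded LS U"

definition end_candidate :: "'a topology \<Rightarrow> 'a set set set \<Rightarrow> 'a set set \<Rightarrow> bool" where
  "end_candidate T LS E \<longleftrightarrow> E \<noteq> {} \<and> (\<forall>U\<in>E. end_set T LS U) \<and>
     (\<forall>U\<in>E. \<forall>V\<in>E. U \<inter> V \<in> E)"

definition is_end :: "'a topology \<Rightarrow> 'a set set set \<Rightarrow> 'a set set \<Rightarrow> bool" where
  "is_end T LS E \<longleftrightarrow> end_candidate T LS E \<and>
     (\<forall>E'. end_candidate T LS E' \<and> E \<subseteq> E' \<longrightarrow> E' = E)"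

definition Ends :: "'a topology \<Rightarrow> 'a set set set \<Rightarrow> 'a set set set" where
  "Ends T LS = {E. is_end T LS E}"

definition ends_topology :: "'a topology \<Rightarrow> 'a set set set \<Rightarrow> 'a set set topology" where
  "ends_topology T LS = subtopology
     (topology_generated_by
        {{E \<in> Ends T LS. U \<in> E} | U. openin T U \<and> coarsely_clopen (topspace T) LS U})
     (Ends T LS)"

definition coarse_map :: "'a set \<Rightarrow> 'a set set set \<Rightarrow> 'b set \<Rightarrow> 'b set set set \<Rightarrow> ('a \<Rightarrow> 'b) \<Rightarrow> bool" where
  "coarse_map X LSX Y LSY f \<longleftrightarrow>
     (\<forall>B. B \<subseteq> Y \<and> ls_bounded LSY B \<longrightarrow> ls_bounded LSX {x \<in> X. f x \<in> B})"

definition ls_continuous :: "'a set set set \<Rightarrow> 'b set set set \<Rightarrow> ('a \<Rightarrow> 'b) \<Rightarrow> bool" where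
  "ls_continuous LSX LSY f \<longleftrightarrow> (\<forall>\<U>\<in>LSX. ub_family LSY ((\<lambda>U. f ` U) ` \<U>))"

definition close_maps :: "'a set \<Rightarrow> 'b set set set \<Rightarrow> ('a \<Rightarrow> 'b) \<Rightarrow> ('a \<Rightarrow> 'b) \<Rightarrow> bool" where
  "close_maps X LSY f g \<longleftrightarrow> (\<exists>\<U>\<in>LSY. \<forall>x\<in>X. f x \<in> st {g x} \<U>)"

definition coarsely_equivalent ::
  "'a topology \<Rightarrow> 'a set set set \<Rightarrow> 'b topology \<Rightarrow> 'b set set set \<Rightarrow> bool" where
  "coarsely_equivalent TX LSX TY LSY \<longleftrightarrow>
     (\<exists>f g. f \<in> topspace TX \<rightarrow> topspace TY \<and> g \<in> topspace TY \<rightarrow> topspace TX \<and>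
        coarse_map (topspace TX) LSX (topspace TY) LSY f \<and> ls_continuous LSX LSY f \<and>
        coarse_map (topspace TY) LSY (topspace TX) LSX g \<and> ls_continuous LSY LSX g \<and>
        close_maps (topspace TX) LSX (g \<circ> f) id \<and>
        close_maps (topspace TY) LSY (f \<circ> g) id)"

end

theory Submission
  imports Defs
begin



locale tcs =
  fixes T :: "'a topology" and LS :: "'a set set set"
  assumes tcs: "top_coarse_space T LS"
begin

lemma ls: "large_scale (topspace T) LS"
  using tcs unfolding top_coarse_space_def by (elim conjE)

lemma cover1: "\<U> \<in> LS \<Longrightarrow> is_cover (topspace T) \<U>"
proof -
  assume "\<U> \<in> LS"
  moreover have "\<forall>\<U>\<in>LS. is_cover (topspace T) \<U>" using ls unfolding large_scale_def by (elim conjE)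
  ultimately show ?thesis by (rule bspec[rotated])
qed

lemma cover: "\<U> \<in> LS \<Longrightarrow> \<Union>\<U> = topspace T \<and> \<U> \<subseteq> Pow (topspace T)"
  using cover1 unfolding is_cover_def by simp

lemma st_fam_in: "\<U> \<in> LS \<Longrightarrow> \<V> \<in> LS \<Longrightarrow> st_fam \<U> \<V> \<in> LS"
proof -
  assume a: "\<U> \<in> LS" "\<V> \<in> LS"
  have "\<forall>\<U>\<in>LS. \<forall>\<V>\<in>LS. st_fam \<U> \<V> \<in> LS" using ls unfolding large_scale_def by (elim conjE)
  then show ?thesis using a by simp
qed

lemma open_cover: "\<exists>\<U>\<in>LS. \<forall>U\<in>\<U>. openin T U"
  using tcs unfolding top_coarse_space_def by (elim conjE)

lemma bd_X: "ls_bounded LS B \<Longrightarrow> B \<subseteq> topspace T"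
proof -
  assume "ls_bounded LS B"
  then obtain \<U> U where "\<U> \<in> LS" "U \<in> \<U>" "B \<subseteq> U" unfolding ls_bounded_def by blast
  then show ?thesis using cover[of \<U>] by blast
qed

lemma bd_subset: "ls_bounded LS B \<Longrightarrow> A \<subseteq> B \<Longrightarrow> ls_bounded LS A"
  unfolding ls_bounded_def by blast

lemma bd_Un: "ls_bounded LS A \<Longrightarrow> ls_bounded LS B \<Longrightarrow> ls_bounded LS (A \<union> B)"
proof -
  assume a: "ls_bounded LS A" "ls_bounded LS B"
  have h: "\<forall>A B. A \<subseteq> topspace T \<and> B \<subseteq> topspace T \<and> ls_bounded LS A \<and> ls_bounded LS B
            \<longrightarrow> ls_bounded LS (A \<union> B)"
    using tcs unfolding top_coarse_space_def by (elim conjE)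
  show ?thesis using h[rule_format, OF conjI[OF bd_X[OF a(1)] conjI[OF bd_X[OF a(2)] conjI[OF a]]]] .
qed

lemma bd_empty: "ls_bounded LS B \<Longrightarrow> ls_bounded LS {}"
  using bd_subset by blast

lemma bd_empty2: "topspace T \<noteq> {} \<Longrightarrow> ls_bounded LS {}"
proof -
  assume "topspace T \<noteq> {}"
  obtain \<U> where "\<U> \<in> LS" using open_cover by blast
  then have "\<Union>\<U> \<noteq> {}" using cover \<open>topspace T \<noteq> {}\<close> by simp
  then obtain U where "U \<in> \<U>" by blast
  then show ?thesis unfolding ls_bounded_def using \<open>\<U> \<in> LS\<close> by blast
qed

lemma st_mono: "A \<subseteq> B \<Longrightarrow> st A \<U> \<subseteq> st B \<U>"
  unfolding st_def by blast

lemma st_Un: "st (A \<union> B) \<U> = st A \<U> \<union> st B \<U>"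
  unfolding st_def by blast

lemma st_empty: "st {} \<U> = {}"
  unfolding st_def by blast

lemma subset_st: "\<U> \<in> LS \<Longrightarrow> A \<subseteq> topspace T \<Longrightarrow> A \<subseteq> st A \<U>"
proof
  fix a assume "\<U> \<in> LS" "A \<subseteq> topspace T" "a \<in> A"
  then have "a \<in> \<Union>\<U>" using cover by blast
  then obtain U where "U \<in> \<U>" "a \<in> U" by blast
  then show "a \<in> st A \<U>" unfolding st_def using \<open>a \<in> A\<close> by blast
qed

lemma st_X: "\<U> \<in> LS \<Longrightarrow> st A \<U> \<subseteq> topspace T"
proof -
  assume "\<U> \<in> LS"
  then have "\<U> \<subseteq> Pow (topspace T)" using cover by blast
  then show ?thesis unfolding st_def by blast
qed

lemma bd_st: "ls_bounded LS B \<Longrightarrow> \<V> \<in> LS \<Longrightarrow> ls_bounded LS (st B \<V>)"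
proof -
  assume "ls_bounded LS B" "\<V> \<in> LS"
  then obtain \<U> U where U: "\<U> \<in> LS" "U \<in> \<U>" "B \<subseteq> U" unfolding ls_bounded_def by blast
  have "st B \<V> \<subseteq> st U \<V>" using U st_mono by blast
  moreover have "st U \<V> \<in> st_fam \<U> \<V>" unfolding st_fam_def using U by blast
  ultimately show ?thesis unfolding ls_bounded_def using st_fam_in U \<open>\<V> \<in> LS\<close> by blast
qed

lemma cc_sub: "coarsely_clopen (topspace T) LS A \<Longrightarrow> A \<subseteq> topspace T"
  unfolding coarsely_clopen_def by blast

lemma cc_bd: "coarsely_clopen (topspace T) LS A \<Longrightarrow> \<U> \<in> LS \<Longrightarrow>
   ls_bounded LS (st A \<U> \<inter> st (topspace T - A) \<U>)"
  unfolding coarsely_clopen_def by blast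

lemma cc_Int:
  assumes "coarsely_clopen (topspace T) LS A" "coarsely_clopen (topspace T) LS B"
  shows "coarsely_clopen (topspace T) LS (A \<inter> B)"
  unfolding coarsely_clopen_def
proof (intro conjI ballI)
  show "A \<inter> B \<subseteq> topspace T" using cc_sub assms by blast
  fix \<U> assume U: "\<U> \<in> LS"
  have "st (A \<inter> B) \<U> \<inter> st (topspace T - A \<inter> B) \<U> \<subseteq>
     (st A \<U> \<inter> st (topspace T - A) \<U>) \<union> (st B \<U> \<inter> st (topspace T - B) \<U>)"
    unfolding st_def by blast
  then show "ls_bounded LS (st (A \<inter> B) \<U> \<inter> st (topspace T - A \<inter> B) \<U>)"
    using bd_Un[OF cc_bd[OF assms(1) U] cc_bd[OF assms(2) U]] bd_subset by blast
qed

lemma cc_compl: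
  assumes "coarsely_clopen (topspace T) LS A"
  shows "coarsely_clopen (topspace T) LS (topspace T - A)"
  unfolding coarsely_clopen_def
proof (intro conjI ballI)
  show "topspace T - A \<subseteq> topspace T" by blast
  fix \<U> assume U: "\<U> \<in> LS"
  have e: "topspace T - (topspace T - A) = A" using cc_sub assms by blast
  show "ls_bounded LS (st (topspace T - A) \<U> \<inter> st (topspace T - (topspace T - A)) \<U>)"
    unfolding e using cc_bd[OF assms U] by (simp add: Int_commute)
qed

lemma cc_X: "ls_bounded LS {} \<Longrightarrow> coarsely_clopen (topspace T) LS (topspace T)"
proof -
  assume b: "ls_bounded LS {}"
  have "\<forall>\<U>\<in>LS. ls_bounded LS (st (topspace T) \<U> \<inter> st (topspace T - topspace T) \<U>)"
    using b by (simp add: st_empty)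
  then show ?thesis unfolding coarsely_clopen_def by blast
qed

lemma cc_diff:
  assumes "coarsely_clopen (topspace T) LS A" "B \<subseteq> topspace T"
    "ls_bounded LS ((A - B) \<union> (B - A))"
  shows "coarsely_clopen (topspace T) LS B"
  unfolding coarsely_clopen_def
proof (intro conjI ballI)
  show "B \<subseteq> topspace T" by fact
  fix \<U> assume U: "\<U> \<in> LS"
  let ?D = "(A - B) \<union> (B - A)"
  have "st B \<U> \<subseteq> st A \<U> \<union> st ?D \<U>" unfolding st_def by blast
  moreover have "st (topspace T - B) \<U> \<subseteq> st (topspace T - A) \<U> \<union> st ?D \<U>"
  proof -
    have "topspace T - B \<subseteq> (topspace T - A) \<union> ?D" by blast
    then show ?thesis unfolding st_def by blast
  qed
  ultimately have "st B \<U> \<inter> st (topspace T - B) \<U> \<subseteq>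
      (st A \<U> \<inter> st (topspace T - A) \<U>) \<union> st ?D \<U>" by blast
  then show "ls_bounded LS (st B \<U> \<inter> st (topspace T - B) \<U>)"
    using bd_Un[OF cc_bd[OF assms(1) U] bd_st[OF assms(3) U]] bd_subset by blast
qed

lemma st_diff_bd:
  assumes "coarsely_clopen (topspace T) LS A" "\<U> \<in> LS"
  shows "ls_bounded LS (st A \<U> - A)"
proof -
  have "st A \<U> - A \<subseteq> st A \<U> \<inter> st (topspace T - A) \<U>"
    using subset_st[OF assms(2), of "topspace T - A"] st_X[OF assms(2), of A] by blast
  then show ?thesis using bd_subset cc_bd assms by blast
qed

lemma st_cc:
  assumes "coarsely_clopen (topspace T) LS A" "\<U> \<in> LS"
  shows "coarsely_clopen (topspace T) LS (st A \<U>)"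
proof -
  have "A \<subseteq> st A \<U>" using subset_st assms cc_sub by blast
  then have "(A - st A \<U>) \<union> (st A \<U> - A) = st A \<U> - A" by blast
  then show ?thesis using cc_diff[OF assms(1) st_X[OF assms(2)]] st_diff_bd[OF assms] by simp
qed

lemma st_open: "\<forall>U\<in>\<U>. openin T U \<Longrightarrow> openin T (st A \<U>)"
  unfolding st_def by (rule openin_Union) blast

end



context tcs
begin

lemma bd_empty3: "coarsely_clopen (topspace T) LS A \<Longrightarrow> ls_bounded LS {}"
proof -
  assume a: "coarsely_clopen (topspace T) LS A"
  obtain \<U> where "\<U> \<in> LS" using open_cover by blast
  then show ?thesis using cc_bd[OF a] bd_empty by blast
qed

lemma end_cand: "is_end T LS E \<Longrightarrow> end_candidate T LS E"
  unfolding is_end_def by (elim conjE)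

lemma end_max: "is_end T LS E \<Longrightarrow> end_candidate T LS E' \<Longrightarrow> E \<subseteq> E' \<Longrightarrow> E' = E"
  unfolding is_end_def by blast

lemma end_ne: "is_end T LS E \<Longrightarrow> E \<noteq> {}"
  using end_cand unfolding end_candidate_def by blast

lemma end_Int: "is_end T LS E \<Longrightarrow> U \<in> E \<Longrightarrow> V \<in> E \<Longrightarrow> U \<inter> V \<in> E"
  using end_cand unfolding end_candidate_def by blast

lemma end_setD:
  assumes "is_end T LS E" "U \<in> E"
  shows "openin T U" "coarsely_clopen (topspace T) LS U" "\<not> ls_bounded LS U"
proof -
  have "end_set T LS U" using assms end_cand unfolding end_candidate_def by blast
  then show "openin T U" "coarsely_clopen (topspace T) LS U" "\<not> ls_bounded LS U"
    unfolding end_set_def by blast+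
qed

lemma absorb_gen:
  assumes E: "is_end T LS E" and W: "openin T W" "coarsely_clopen (topspace T) LS W"
    and nb: "\<forall>V\<in>E. \<not> ls_bounded LS (W \<inter> V)"
  shows "W \<in> E"
proof -
  define E' where "E' = E \<union> {W \<inter> V | V. V \<in> E} \<union> {W}"
  have es: "end_set T LS A" if "A \<in> E'" for A
  proof -
    consider "A \<in> E" | V where "V \<in> E" "A = W \<inter> V" | "A = W"
      using \<open>A \<in> E'\<close> unfolding E'_def by blast
    then show ?thesis
    proof cases
      case 1 then show ?thesis unfolding end_set_def using end_setD[OF E] by blast
    next
      case 2 then show ?thesis unfolding end_set_def
        using end_setD[OF E 2(1)] W nb cc_Int by blast
    next
      case 3
      obtain V where "V \<in> E" using end_ne[OF E] by blast
      then have "\<not> ls_bounded LS W" using nb bd_subset[of W "W \<inter> V"] by blast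
      then show ?thesis unfolding end_set_def 3 using W by blast
    qed
  qed
  have cl: "A \<inter> B \<in> E'" if "A \<in> E'" "B \<in> E'" for A B
  proof -
    have c: "A \<in> E \<or> (\<exists>V\<in>E. A = W \<inter> V) \<or> A = W" using \<open>A \<in> E'\<close> unfolding E'_def by blast
    have d: "B \<in> E \<or> (\<exists>V\<in>E. B = W \<inter> V) \<or> B = W" using \<open>B \<in> E'\<close> unfolding E'_def by blast
    have m: "W \<inter> V \<in> E'" if "V \<in> E" for V unfolding E'_def using that by blast
    have m2: "V \<in> E'" if "V \<in> E" for V unfolding E'_def using that by blast
    from c d show ?thesis
    proof (elim disjE bexE)
      assume "A \<in> E" "B \<in> E" then show ?thesis using m2 end_Int[OF E] by blast
    next
      fix V assume "A \<in> E" "V \<in> E" "B = W \<inter> V"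
      then have "A \<inter> B = W \<inter> (A \<inter> V)" by blast
      then show ?thesis using m end_Int[OF E] \<open>A \<in> E\<close> \<open>V \<in> E\<close> by simp
    next
      assume "A \<in> E" "B = W" then show ?thesis using m by (simp add: Int_commute)
    next
      fix V assume "V \<in> E" "A = W \<inter> V" "B \<in> E"
      then have "A \<inter> B = W \<inter> (V \<inter> B)" by blast
      then show ?thesis using m end_Int[OF E] \<open>B \<in> E\<close> \<open>V \<in> E\<close> by simp
    next
      fix V V' assume "V \<in> E" "A = W \<inter> V" "V' \<in> E" "B = W \<inter> V'"
      then have "A \<inter> B = W \<inter> (V \<inter> V')" by blast
      then show ?thesis using m end_Int[OF E] \<open>V' \<in> E\<close> \<open>V \<in> E\<close> by simp
    next
      fix V assume "V \<in> E" "A = W \<inter> V" "B = W"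
      then have "A \<inter> B = W \<inter> V" by blast
      then show ?thesis using m \<open>V \<in> E\<close> by simp
    next
      assume "A = W" "B \<in> E" then show ?thesis using m by simp
    next
      fix V assume "A = W" "V \<in> E" "B = W \<inter> V"
      then have "A \<inter> B = W \<inter> V" by blast
      then show ?thesis using m \<open>V \<in> E\<close> by simp
    next
      assume "A = W" "B = W" then show ?thesis unfolding E'_def by simp
    qed
  qed
  have "E' \<noteq> {}" unfolding E'_def by blast
  then have "end_candidate T LS E'"
    unfolding end_candidate_def using es cl by blast
  moreover have "E \<subseteq> E'" unfolding E'_def by blast
  ultimately have "E' = E" using end_max[OF E] by blast
  then show ?thesis unfolding E'_def by blast
qed

lemma absorb:
  assumes E: "is_end T LS E" and U: "U \<in> E" and W: "openin T W" "coarsely_clopen (topspace T) LS W"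
    and b: "ls_bounded LS (U - W)"
  shows "W \<in> E"
proof (rule absorb_gen[OF E W], rule ballI)
  fix V assume "V \<in> E"
  then have "U \<inter> V \<in> E" using end_Int[OF E U] by blast
  then have nb: "\<not> ls_bounded LS (U \<inter> V)" using end_setD[OF E] by blast
  show "\<not> ls_bounded LS (W \<inter> V)"
  proof
    assume "ls_bounded LS (W \<inter> V)"
    then have "ls_bounded LS ((W \<inter> V) \<union> (U - W))" using bd_Un b by blast
    moreover have "U \<inter> V \<subseteq> (W \<inter> V) \<union> (U - W)" by blast
    ultimately show False using nb bd_subset by blast
  qed
qed

lemma prime:
  assumes E: "is_end T LS E" and A: "coarsely_clopen (topspace T) LS A"
  shows "(\<exists>U\<in>E. ls_bounded LS (U - A)) \<or> (\<exists>U\<in>E. ls_bounded LS (U \<inter> A))"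
proof (rule ccontr)
  assume "\<not> ?thesis"
  then have n1: "\<forall>U\<in>E. \<not> ls_bounded LS (U - A)" and n2: "\<forall>U\<in>E. \<not> ls_bounded LS (U \<inter> A)" by blast+
  obtain \<U> where U: "\<U> \<in> LS" "\<forall>U\<in>\<U>. openin T U" using open_cover by blast
  have Asub: "A \<subseteq> topspace T" using cc_sub[OF A] .
  define P where "P = st A \<U>"
  define Q where "Q = st (topspace T - A) \<U>"
  have AP: "A \<subseteq> P" unfolding P_def using subset_st[OF U(1) Asub] .
  have AQ: "topspace T - A \<subseteq> Q" unfolding Q_def using subset_st[OF U(1)] by blast
  have "P \<in> E"
  proof (rule absorb_gen[OF E])
    show "openin T P" unfolding P_def using st_open U by blast
    show "coarsely_clopen (topspace T) LS P" unfolding P_def using st_cc[OF A U(1)] .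
    show "\<forall>V\<in>E. \<not> ls_bounded LS (P \<inter> V)"
    proof (intro ballI notI)
      fix V assume "V \<in> E" "ls_bounded LS (P \<inter> V)"
      moreover have "V \<inter> A \<subseteq> P \<inter> V" using AP by blast
      ultimately show False using n2 bd_subset by blast
    qed
  qed
  moreover have "Q \<in> E"
  proof (rule absorb_gen[OF E])
    show "openin T Q" unfolding Q_def using st_open U by blast
    show "coarsely_clopen (topspace T) LS Q" unfolding Q_def using st_cc[OF cc_compl[OF A] U(1)] .
    show "\<forall>V\<in>E. \<not> ls_bounded LS (Q \<inter> V)"
    proof (intro ballI notI)
      fix V assume "V \<in> E" "ls_bounded LS (Q \<inter> V)"
      moreover have "V \<subseteq> topspace T" using end_setD(1)[OF E \<open>V \<in> E\<close>] openin_subset by blast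
      then have "V - A \<subseteq> Q \<inter> V" using AQ by blast
      ultimately show False using n1 bd_subset by blast
    qed
  qed
  ultimately have "P \<inter> Q \<in> E" using end_Int[OF E] by blast
  then have "\<not> ls_bounded LS (P \<inter> Q)" using end_setD[OF E] by blast
  moreover have "ls_bounded LS (P \<inter> Q)" unfolding P_def Q_def using cc_bd[OF A U(1)] .
  ultimately show False by blast
qed

lemma X_in_end:
  assumes E: "is_end T LS E"
  shows "topspace T \<in> E"
proof -
  obtain U where U: "U \<in> E" using end_ne[OF E] by blast
  have b0: "ls_bounded LS {}" using bd_empty3 end_setD(2)[OF E U] by blast
  have "U - topspace T = {}" using end_setD(1)[OF E U] openin_subset by blast
  then have b1: "ls_bounded LS (U - topspace T)" using b0 by (metis)
  show ?thesis using absorb[OF E U openin_topspace cc_X[OF b0] b1] .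
qed

end



definition Phi :: "'a topology \<Rightarrow> 'a set set set \<Rightarrow> 'b topology \<Rightarrow> 'b set set set \<Rightarrow> ('a \<Rightarrow> 'b)
   \<Rightarrow> 'a set set \<Rightarrow> 'b set set" where
  "Phi TX LSX TY LSY f E = {V. end_set TY LSY V \<and>
      (\<exists>U\<in>E. ls_bounded LSX (U - {x \<in> topspace TX. f x \<in> V}))}"

locale cmap = X: tcs TX LSX + Y: tcs TY LSY
  for TX :: "'a topology" and LSX and TY :: "'b topology" and LSY +
  fixes f :: "'a \<Rightarrow> 'b"
  assumes fX: "f \<in> topspace TX \<rightarrow> topspace TY"
    and fc: "coarse_map (topspace TX) LSX (topspace TY) LSY f"
    and fl: "ls_continuous LSX LSY f"
begin

lemma fx: "x \<in> topspace TX \<Longrightarrow> f x \<in> topspace TY"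
  using fX by blast

lemma pre_bd: "ls_bounded LSY B \<Longrightarrow> ls_bounded LSX {x \<in> topspace TX. f x \<in> B}"
  using fc Y.bd_X unfolding coarse_map_def by blast

lemma pre_cc:
  assumes B: "coarsely_clopen (topspace TY) LSY B"
  shows "coarsely_clopen (topspace TX) LSX {x \<in> topspace TX. f x \<in> B}"
  unfolding coarsely_clopen_def
proof (intro conjI ballI)
  let ?A = "{x \<in> topspace TX. f x \<in> B}"
  show "?A \<subseteq> topspace TX" by blast
  fix \<U> assume U: "\<U> \<in> LSX"
  have "ub_family LSY ((\<lambda>U. f ` U) ` \<U>)" using fl U unfolding ls_continuous_def by blast
  then obtain \<V> where V: "\<V> \<in> LSY" "refines ((\<lambda>U. f ` U) ` \<U>) \<V>" unfolding ub_family_def by blast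
  have ref: "\<exists>V\<in>\<V>. f ` U \<subseteq> V" if "U \<in> \<U>" for U
    using V(2) that unfolding refines_def by blast
  let ?C = "st B \<V> \<inter> st (topspace TY - B) \<V>"
  have bC: "ls_bounded LSY ?C" using Y.cc_bd[OF B V(1)] .
  have "st ?A \<U> \<inter> st (topspace TX - ?A) \<U> \<subseteq> {x \<in> topspace TX. f x \<in> ?C}"
  proof
    fix x assume x: "x \<in> st ?A \<U> \<inter> st (topspace TX - ?A) \<U>"
    then obtain U1 a where U1: "U1 \<in> \<U>" "x \<in> U1" "a \<in> U1" "a \<in> ?A" unfolding st_def by blast
    obtain U2 b where U2: "U2 \<in> \<U>" "x \<in> U2" "b \<in> U2" "b \<in> topspace TX - ?A" using x unfolding st_def by blast
    have "\<U> \<subseteq> Pow (topspace TX)" using X.cover[OF U] by blast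
    then have xX: "x \<in> topspace TX" using U1 by blast
    obtain V1 where V1: "V1 \<in> \<V>" "f ` U1 \<subseteq> V1" using ref U1(1) by blast
    obtain V2 where V2: "V2 \<in> \<V>" "f ` U2 \<subseteq> V2" using ref U2(1) by blast
    have "f x \<in> st B \<V>" unfolding st_def using V1 U1 by blast
    moreover have "f b \<in> topspace TY - B" using U2(4) fx by blast
    then have "f x \<in> st (topspace TY - B) \<V>" unfolding st_def using V2 U2 by blast
    ultimately show "x \<in> {x \<in> topspace TX. f x \<in> ?C}" using xX by blast
  qed
  then show "ls_bounded LSX (st ?A \<U> \<inter> st (topspace TX - ?A) \<U>)"
    using pre_bd[OF bC] X.bd_subset by blast
qed

lemma Phi_end:
  assumes E: "is_end TX LSX E"
  shows "is_end TY LSY (Phi TX LSX TY LSY f E)"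
proof -
  let ?P = "Phi TX LSX TY LSY f E"
  let ?pre = "\<lambda>V. {x \<in> topspace TX. f x \<in> V}"
  have Pmem: "V \<in> ?P \<longleftrightarrow> end_set TY LSY V \<and> (\<exists>U\<in>E. ls_bounded LSX (U - ?pre V))" for V
    unfolding Phi_def by simp
  obtain U0 where U0: "U0 \<in> E" using X.end_ne[OF E] by blast
  have bX0: "ls_bounded LSX {}" using X.bd_empty3 X.end_setD(2)[OF E U0] by blast
  have "U0 \<noteq> {}" using X.end_setD(3)[OF E U0] bX0 by blast
  moreover have "U0 \<subseteq> topspace TX" using X.end_setD(1)[OF E U0] openin_subset by blast
  ultimately obtain x0 where "x0 \<in> topspace TX" by blast
  then have "topspace TY \<noteq> {}" using fx by blast
  then have bY0: "ls_bounded LSY {}" using Y.bd_empty2 by blast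
  have preY: "?pre (topspace TY) = topspace TX" using fx by blast
  have YP: "topspace TY \<in> ?P"
  proof -
    have "\<not> ls_bounded LSY (topspace TY)"
    proof
      assume "ls_bounded LSY (topspace TY)"
      then have "ls_bounded LSX (topspace TX)" using pre_bd preY by metis
      then show False using X.bd_subset \<open>U0 \<subseteq> topspace TX\<close> X.end_setD(3)[OF E U0] by blast
    qed
    then have "end_set TY LSY (topspace TY)" unfolding end_set_def using Y.cc_X[OF bY0] by simp
    moreover have "U0 - ?pre (topspace TY) = {}" using preY \<open>U0 \<subseteq> topspace TX\<close> by blast
    then have "ls_bounded LSX (U0 - ?pre (topspace TY))" using bX0 by metis
    ultimately show ?thesis unfolding Pmem using U0 by blast
  qed
  have IntP: "V1 \<inter> V2 \<in> ?P" if hV: "V1 \<in> ?P" "V2 \<in> ?P" for V1 V2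
  proof -
    obtain U1 where U1: "U1 \<in> E" "ls_bounded LSX (U1 - ?pre V1)" and e1: "end_set TY LSY V1"
      using hV(1) unfolding Pmem by blast
    obtain U2 where U2: "U2 \<in> E" "ls_bounded LSX (U2 - ?pre V2)" and e2: "end_set TY LSY V2"
      using hV(2) unfolding Pmem by blast
    have UE: "U1 \<inter> U2 \<in> E" using X.end_Int[OF E U1(1) U2(1)] .
    have "U1 \<inter> U2 - ?pre (V1 \<inter> V2) \<subseteq> (U1 - ?pre V1) \<union> (U2 - ?pre V2)" by blast
    then have bd: "ls_bounded LSX (U1 \<inter> U2 - ?pre (V1 \<inter> V2))"
      using X.bd_Un[OF U1(2) U2(2)] X.bd_subset by blast
    have "\<not> ls_bounded LSY (V1 \<inter> V2)"
    proof
      assume "ls_bounded LSY (V1 \<inter> V2)"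
      then have "ls_bounded LSX (?pre (V1 \<inter> V2))" using pre_bd by blast
      then have "ls_bounded LSX (?pre (V1 \<inter> V2) \<union> (U1 \<inter> U2 - ?pre (V1 \<inter> V2)))"
        using X.bd_Un bd by blast
      moreover have "U1 \<inter> U2 \<subseteq> ?pre (V1 \<inter> V2) \<union> (U1 \<inter> U2 - ?pre (V1 \<inter> V2))" by blast
      ultimately show False using X.bd_subset X.end_setD(3)[OF E UE] by blast
    qed
    moreover have "openin TY (V1 \<inter> V2)" using e1 e2 unfolding end_set_def by blast
    moreover have "coarsely_clopen (topspace TY) LSY (V1 \<inter> V2)"
      using e1 e2 Y.cc_Int unfolding end_set_def by blast
    ultimately have "end_set TY LSY (V1 \<inter> V2)" unfolding end_set_def by blast
    then show ?thesis unfolding Pmem using UE bd by blast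
  qed
  have "\<forall>U\<in>?P. end_set TY LSY U" unfolding Phi_def by blast
  then have cand: "end_candidate TY LSY ?P"
    unfolding end_candidate_def using YP IntP by blast
  have maxi: "E' = ?P" if E': "end_candidate TY LSY E'" "?P \<subseteq> E'" for E'
  proof
    show "?P \<subseteq> E'" by fact
    show "E' \<subseteq> ?P"
    proof
      fix V assume VE: "V \<in> E'"
      have eV: "end_set TY LSY V" using E'(1) VE unfolding end_candidate_def by blast
      then have Vo: "openin TY V" and Vc: "coarsely_clopen (topspace TY) LSY V"
        and Vb: "\<not> ls_bounded LSY V" unfolding end_set_def by blast+
      have VY: "V \<subseteq> topspace TY" using Y.cc_sub[OF Vc] .
      have Ac: "coarsely_clopen (topspace TX) LSX (?pre V)" using pre_cc[OF Vc] .
      from X.prime[OF E Ac] show "V \<in> ?P"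
      proof
        assume "\<exists>U\<in>E. ls_bounded LSX (U - ?pre V)"
        then show ?thesis unfolding Pmem using eV by blast
      next
        assume "\<exists>U\<in>E. ls_bounded LSX (U \<inter> ?pre V)"
        then obtain U where U: "U \<in> E" "ls_bounded LSX (U \<inter> ?pre V)" by blast
        have UX: "U \<subseteq> topspace TX" using X.end_setD(1)[OF E U(1)] openin_subset by blast
        obtain \<V> where OV: "\<V> \<in> LSY" "\<forall>V\<in>\<V>. openin TY V" using Y.open_cover by blast
        define W where "W = st (topspace TY - V) \<V>"
        have Wo: "openin TY W" unfolding W_def using Y.st_open OV by blast
        have Wc: "coarsely_clopen (topspace TY) LSY W"
          unfolding W_def using Y.st_cc[OF Y.cc_compl[OF Vc] OV(1)] .
        have YW: "topspace TY - V \<subseteq> W" unfolding W_def using Y.subset_st[OF OV(1)] by blast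
        have "U - ?pre W \<subseteq> U \<inter> ?pre V" using UX YW fx by blast
        then have bUW: "ls_bounded LSX (U - ?pre W)" using U(2) X.bd_subset by blast
        show ?thesis
        proof (cases "ls_bounded LSY W")
          case False
          then have "end_set TY LSY W" unfolding end_set_def using Wo Wc by blast
          then have "W \<in> ?P" unfolding Pmem using U(1) bUW by blast
          then have "W \<in> E'" using E'(2) by blast
          then have "V \<inter> W \<in> E'" using E'(1) VE unfolding end_candidate_def by blast
          then have nb: "\<not> ls_bounded LSY (V \<inter> W)" using E'(1) unfolding end_candidate_def end_set_def by blast
          have "V \<inter> W \<subseteq> st V \<V> \<inter> st (topspace TY - V) \<V>"
            unfolding W_def using Y.subset_st[OF OV(1) VY] by blast
          then have "ls_bounded LSY (V \<inter> W)" using Y.cc_bd[OF Vc OV(1)] Y.bd_subset by blast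
          then show ?thesis using nb by blast
        next
          case True
          then have "ls_bounded LSY (topspace TY - V)" using YW Y.bd_subset by blast
          then have b2: "ls_bounded LSX (?pre (topspace TY - V))" using pre_bd by blast
          have "U \<subseteq> (U \<inter> ?pre V) \<union> ?pre (topspace TY - V)" using UX fx by blast
          then have "ls_bounded LSX U" using X.bd_Un[OF U(2) b2] X.bd_subset by blast
          then show ?thesis using X.end_setD(3)[OF E U(1)] by blast
        qed
      qed
    qed
  qed
  show ?thesis unfolding is_end_def using cand maxi by blast
qed

end



context cmap
begin

lemma Phi_iff:
  assumes E: "is_end TX LSX E" and Vo: "openin TY V" and Vc: "coarsely_clopen (topspace TY) LSY V"
    and U: "\<U> \<in> LSX" "\<forall>U\<in>\<U>. openin TX U"
  shows "V \<in> Phi TX LSX TY LSY f E \<longleftrightarrow>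
     \<not> ls_bounded LSY V \<and> st {x \<in> topspace TX. f x \<in> V} \<U> \<in> E"
proof -
  let ?A = "{x \<in> topspace TX. f x \<in> V}"
  have Ac: "coarsely_clopen (topspace TX) LSX ?A" using pre_cc[OF Vc] .
  have A'o: "openin TX (st ?A \<U>)" using X.st_open U(2) by blast
  have A'c: "coarsely_clopen (topspace TX) LSX (st ?A \<U>)" using X.st_cc[OF Ac U(1)] .
  have AA': "?A \<subseteq> st ?A \<U>" by (rule X.subset_st[OF U(1)]) auto
  show ?thesis
  proof
    assume "V \<in> Phi TX LSX TY LSY f E"
    then have eV: "end_set TY LSY V" and "\<exists>U\<in>E. ls_bounded LSX (U - ?A)" unfolding Phi_def by blast+
    then obtain U0 where U0: "U0 \<in> E" "ls_bounded LSX (U0 - ?A)" by blast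
    have "ls_bounded LSX (U0 - st ?A \<U>)" using U0(2) AA' X.bd_subset[of "U0 - ?A" "U0 - st ?A \<U>"] by blast
    then have "st ?A \<U> \<in> E" using X.absorb[OF E U0(1) A'o A'c] by blast
    then show "\<not> ls_bounded LSY V \<and> st ?A \<U> \<in> E" using eV unfolding end_set_def by blast
  next
    assume h: "\<not> ls_bounded LSY V \<and> st ?A \<U> \<in> E"
    then have "end_set TY LSY V" unfolding end_set_def using Vo Vc by blast
    moreover have "ls_bounded LSX (st ?A \<U> - ?A)" using X.st_diff_bd[OF Ac U(1)] .
    ultimately show "V \<in> Phi TX LSX TY LSY f E" unfolding Phi_def using h by blast
  qed
qed

lemma Phi_cont:
  "continuous_map (ends_topology TX LSX) (ends_topology TY LSY) (Phi TX LSX TY LSY f)"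
proof -
  let ?SX = "{{E \<in> Ends TX LSX. U \<in> E} | U. openin TX U \<and> coarsely_clopen (topspace TX) LSX U}"
  let ?SY = "{{E \<in> Ends TY LSY. U \<in> E} | U. openin TY U \<and> coarsely_clopen (topspace TY) LSY U}"
  let ?T1 = "subtopology (topology_generated_by ?SX) (Ends TX LSX)"
  let ?P = "Phi TX LSX TY LSY f"
  have ts: "topspace ?T1 \<subseteq> Ends TX LSX" by simp
  have PE: "?P E \<in> Ends TY LSY" if "E \<in> Ends TX LSX" for E
    using Phi_end that unfolding Ends_def by blast
  obtain \<U> where U: "\<U> \<in> LSX" "\<forall>U\<in>\<U>. openin TX U" using X.open_cover by blast
  have "continuous_map ?T1 (topology_generated_by ?SY) ?P"
  proof (rule continuous_on_generated_topo)
    fix B assume "B \<in> ?SY"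
    then obtain V where V: "openin TY V" "coarsely_clopen (topspace TY) LSY V"
      and B: "B = {E \<in> Ends TY LSY. V \<in> E}" by blast
    let ?A' = "st {x \<in> topspace TX. f x \<in> V} \<U>"
    have key: "V \<in> ?P E \<longleftrightarrow> \<not> ls_bounded LSY V \<and> ?A' \<in> E" if "E \<in> Ends TX LSX" for E
      by (rule Phi_iff[OF _ V U]) (use that in \<open>simp add: Ends_def\<close>)
    have eq: "?P -` B \<inter> topspace ?T1 = {E \<in> topspace ?T1. V \<in> ?P E}"
      unfolding B using PE ts by blast
    show "openin ?T1 (?P -` B \<inter> topspace ?T1)"
    proof (cases "ls_bounded LSY V")
      case True
      have "{E \<in> topspace ?T1. V \<in> ?P E} = {}"
        using key True ts by blast
      then have "?P -` B \<inter> topspace ?T1 = {}" using eq by (rule trans[rotated])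
      then show ?thesis by (simp only: openin_empty)
    next
      case False
      have A'o: "openin TX ?A'" using X.st_open U(2) by blast
      have A'c: "coarsely_clopen (topspace TX) LSX ?A'"
        using X.st_cc[OF pre_cc[OF V(2)] U(1)] .
      have inS: "{E \<in> Ends TX LSX. ?A' \<in> E} \<in> ?SX" using A'o A'c by blast
      then have "{E \<in> Ends TX LSX. ?A' \<in> E} \<subseteq> \<Union> ?SX" by (rule Union_upper)
      then have sub: "{E \<in> Ends TX LSX. ?A' \<in> E} \<subseteq> topspace ?T1"
        unfolding topspace_subtopology topology_generated_by_topspace by blast
      have "{E \<in> topspace ?T1. V \<in> ?P E} = {E \<in> Ends TX LSX. ?A' \<in> E}"
      proof (rule set_eqI)
        fix E show "E \<in> {E \<in> topspace ?T1. V \<in> ?P E} \<longleftrightarrow> E \<in> {E \<in> Ends TX LSX. ?A' \<in> E}"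
          using key[of E] False ts sub by blast
      qed
      moreover have "openin ?T1 {E \<in> Ends TX LSX. ?A' \<in> E}"
      proof -
        have o: "openin (topology_generated_by ?SX) {E \<in> Ends TX LSX. ?A' \<in> E}"
          by (rule topology_generated_by_Basis[OF inS])
        have e: "{E \<in> Ends TX LSX. ?A' \<in> E} = {E \<in> Ends TX LSX. ?A' \<in> E} \<inter> Ends TX LSX" by blast
        show ?thesis unfolding openin_subtopology
          by (rule exI[of _ "{E \<in> Ends TX LSX. ?A' \<in> E}"], rule conjI[OF o e])
      qed
      ultimately show ?thesis using eq by (simp only:)
    qed
  next
    show "?P ` topspace ?T1 \<subseteq> \<Union> ?SY"
    proof
      fix E' assume "E' \<in> ?P ` topspace ?T1"
      then obtain E where E: "E \<in> Ends TX LSX" "E' = ?P E" using ts by blast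
      then have E'e: "is_end TY LSY E'" using PE unfolding Ends_def by blast
      obtain V where "V \<in> E'" using Y.end_ne[OF E'e] by blast
      then have b0: "ls_bounded LSY {}" using Y.bd_empty3 Y.end_setD(2)[OF E'e] by blast
      have "topspace TY \<in> E'" using Y.X_in_end[OF E'e] .
      then have "E' \<in> {E \<in> Ends TY LSY. topspace TY \<in> E}" using E'e unfolding Ends_def by blast
      moreover have "{E \<in> Ends TY LSY. topspace TY \<in> E} \<in> ?SY"
        using Y.cc_X[OF b0] openin_topspace by blast
      ultimately show "E' \<in> \<Union> ?SY" by blast
    qed
  qed
  moreover have "?P \<in> topspace ?T1 \<rightarrow> Ends TY LSY" using PE ts by blast
  ultimately show ?thesis unfolding ends_topology_def by (rule continuous_map_into_subtopology)
qed

lemma Phi_inv: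
  assumes g: "cmap TY LSY TX LSX g" and cl: "close_maps (topspace TX) LSX (g \<circ> f) id"
    and E: "is_end TX LSX E"
  shows "Phi TY LSY TX LSX g (Phi TX LSX TY LSY f E) = E"
proof -
  interpret G: cmap TY LSY TX LSX g by (rule g)
  let ?P = "Phi TX LSX TY LSY f E"
  let ?Q = "Phi TY LSY TX LSX g ?P"
  have Pe: "is_end TY LSY ?P" using Phi_end[OF E] .
  have Qe: "is_end TX LSX ?Q" using G.Phi_end[OF Pe] .
  obtain \<W> where W: "\<W> \<in> LSX" "\<forall>x\<in>topspace TX. g (f x) \<in> st {x} \<W>"
    using cl unfolding close_maps_def by auto
  have "E \<subseteq> ?Q"
  proof
    fix U assume UE: "U \<in> E"
    have Uo: "openin TX U" and Uc: "coarsely_clopen (topspace TX) LSX U"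
      and Ub: "\<not> ls_bounded LSX U" using X.end_setD[OF E UE] by blast+
    have UX: "U \<subseteq> topspace TX" using Uo openin_subset by blast
    let ?A = "{y \<in> topspace TY. g y \<in> U}"
    have Ac: "coarsely_clopen (topspace TY) LSY ?A" using G.pre_cc[OF Uc] .
    obtain \<V> where V: "\<V> \<in> LSY" "\<forall>V\<in>\<V>. openin TY V" using Y.open_cover by blast
    define V where "V = st ?A \<V>"
    have Vo: "openin TY V" unfolding V_def using Y.st_open V(2) by blast
    have Vc: "coarsely_clopen (topspace TY) LSY V" unfolding V_def using Y.st_cc[OF Ac V(1)] .
    have AV: "?A \<subseteq> V" unfolding V_def by (rule Y.subset_st[OF V(1)]) auto
    have bVA: "ls_bounded LSY (V - ?A)" unfolding V_def using Y.st_diff_bd[OF Ac V(1)] .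
    have sub: "U - {x \<in> topspace TX. f x \<in> V} \<subseteq> st U \<W> \<inter> st (topspace TX - U) \<W>"
    proof
      fix x assume x: "x \<in> U - {x \<in> topspace TX. f x \<in> V}"
      then have xX: "x \<in> topspace TX" using UX by blast
      then have fxY: "f x \<in> topspace TY" using fx by blast
      have "f x \<notin> V" using x xX by blast
      then have "g (f x) \<notin> U" using AV fxY by blast
      moreover have gX: "g (f x) \<in> topspace TX" using G.fx[OF fxY] .
      obtain W0 where W0: "W0 \<in> \<W>" "W0 \<inter> {x} \<noteq> {}" "g (f x) \<in> W0"
        using W(2) xX unfolding st_def by blast
      have "x \<in> W0" using W0(2) by blast
      show "x \<in> st U \<W> \<inter> st (topspace TX - U) \<W>"
        unfolding st_def using W0 \<open>x \<in> W0\<close> x gX \<open>g (f x) \<notin> U\<close> by blast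
    qed
    have bU: "ls_bounded LSX (U - {x \<in> topspace TX. f x \<in> V})"
      using X.bd_subset[OF X.cc_bd[OF Uc W(1)] sub] .
    have "\<not> ls_bounded LSY V"
    proof
      assume "ls_bounded LSY V"
      then have "ls_bounded LSX {x \<in> topspace TX. f x \<in> V}" using pre_bd by blast
      then have "ls_bounded LSX ({x \<in> topspace TX. f x \<in> V} \<union> (U - {x \<in> topspace TX. f x \<in> V}))"
        using X.bd_Un bU by blast
      then show False using Ub X.bd_subset by blast
    qed
    then have "V \<in> ?P" unfolding Phi_def end_set_def using Vo Vc UE bU by blast
    moreover have "end_set TX LSX U" unfolding end_set_def using Uo Uc Ub by blast
    ultimately show "U \<in> ?Q" unfolding Phi_def using bVA by blast
  qed
  then show ?thesis using X.end_max[OF E X.end_cand[OF Qe]] by blast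
qed

end



lemma ends_top_sub: "topspace (ends_topology T LS) \<subseteq> Ends T LS"
  unfolding ends_topology_def by simp

theorem corollary6p15:
  fixes TX :: "'a topology" and LSX :: "'a set set set"
    and TY :: "'b topology" and LSY :: "'b set set set"
  assumes "top_coarse_space TX LSX"
    and "top_coarse_space TY LSY"
    and "coarsely_equivalent TX LSX TY LSY"
  shows "ends_topology TX LSX homeomorphic_space ends_topology TY LSY"
proof -
  obtain f g where fX: "f \<in> topspace TX \<rightarrow> topspace TY" and gY: "g \<in> topspace TY \<rightarrow> topspace TX"
    and fc: "coarse_map (topspace TX) LSX (topspace TY) LSY f" and fl: "ls_continuous LSX LSY f"
    and gc: "coarse_map (topspace TY) LSY (topspace TX) LSX g" and gl: "ls_continuous LSY LSX g"
    and c1: "close_maps (topspace TX) LSX (g \<circ> f) id"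
    and c2: "close_maps (topspace TY) LSY (f \<circ> g) id"
    using assms(3) unfolding coarsely_equivalent_def by (elim exE conjE)
  have tX: "tcs TX LSX" by (rule tcs.intro[OF assms(1)])
  have tY: "tcs TY LSY" by (rule tcs.intro[OF assms(2)])
  have F: "cmap TX LSX TY LSY f"
    by (rule cmap.intro[OF tX tY], rule cmap_axioms.intro[OF fX fc fl])
  have G: "cmap TY LSY TX LSX g"
    by (rule cmap.intro[OF tY tX], rule cmap_axioms.intro[OF gY gc gl])
  have "homeomorphic_maps (ends_topology TX LSX) (ends_topology TY LSY)
          (Phi TX LSX TY LSY f) (Phi TY LSY TX LSX g)"
    unfolding homeomorphic_maps_def
  proof (intro conjI ballI)
    show "continuous_map (ends_topology TX LSX) (ends_topology TY LSY) (Phi TX LSX TY LSY f)"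
      by (rule cmap.Phi_cont[OF F])
    show "continuous_map (ends_topology TY LSY) (ends_topology TX LSX) (Phi TY LSY TX LSX g)"
      by (rule cmap.Phi_cont[OF G])
  next
    fix E assume "E \<in> topspace (ends_topology TX LSX)"
    then have "is_end TX LSX E" using ends_top_sub unfolding Ends_def by blast
    then show "Phi TY LSY TX LSX g (Phi TX LSX TY LSY f E) = E"
      by (rule cmap.Phi_inv[OF F G c1])
  next
    fix E assume "E \<in> topspace (ends_topology TY LSY)"
    then have "is_end TY LSY E" using ends_top_sub unfolding Ends_def by blast
    then show "Phi TX LSX TY LSY f (Phi TY LSY TX LSX g E) = E"
      by (rule cmap.Phi_inv[OF G F c2])
  qed
  then show ?thesis unfolding homeomorphic_space_def by blast
qed


end
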